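(* Let $g^{ij}(x)$ and $\Gamma^{ij}_k(x)$, $i,j,k=1,\dots,n$, be functions of coordinates $x^1,\dots,x^n$ which satisfy conditions (i)–(v) of the context (no non-degeneracy of $g$ assumed). Suppose that all components $g^{ij}$ and $\Gamma^{ij}_k$ depend linearly (i.e. affinely) on one coordinate $x^\bullet$, that is $\partial_\bullet^2g^{ij}=0$ and $\partial_\bullet^2\Gamma^{ij}_k=0$, where $\partial_\bullet=\partial/\partial x^\bullet$. Then for every constant $\lambda$ the pair $$\big(g^{ij}+\lambda\,\partial_\bullet g^{ij},\ \Gamma^{ij}_k+\lambda\,\partial_\bullet\Gamma^{ij}_k\big)$$ also satisfies conditions (i)–(v). Consequently the pairs $(g,\Gamma)$ and $(\partial_\bullet g,\partial_\bullet\Gamma)$ define compatible (possibly degenerate) Hamiltonian structures of hydrodynamic type, i.e. a bi-Hamiltonian structure.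
   Context: Conditions on a pair $(g^{ij},\Gamma^{ij}_k)$ (summation over repeated indices): (i) $g^{ij}=g^{ji}$; (ii) $\partial g^{ij}/\partial x^k=\Gamma^{ij}_k+\Gamma^{ji}_k$; (iii) $g^{ij}\Gamma^{rs}_i=g^{ri}\Gamma^{js}_i$; (iv) $\Gamma^{ij}_t\Gamma^{tk}_r-\Gamma^{ik}_t\Gamma^{tj}_r=g^{ti}\big(\partial\Gamma^{jk}_r/\partial x^t-\partial\Gamma^{jk}_t/\partial x^r\big)$; (v) $\sum_{\text{cyclic in }i,j,k}\Big[\big(\frac{\partial\Gamma^{ij}_t}{\partial x^q}-\frac{\partial\Gamma^{ij}_q}{\partial x^t}\big)\Gamma^{tk}_r+\big(\frac{\partial\Gamma^{ij}_t}{\partial x^r}-\frac{\partial\Gamma^{ij}_r}{\partial x^t}\big)\Gamma^{tk}_q\Big]=0$. These are necessary and sufficient for the bracket $\{x^i(\sigma),x^j(\sigma')\}=g^{ij}\delta'(\sigma-\sigma')+\Gamma^{ij}_kx^k_\sigma\delta(\sigma-\sigma')$ of fields $x^i(\sigma)$ to be Poisson (a "Hamiltonian structure", possibly degenerate). Two such structures are compatible if every linear combination $\{,\}_1+\lambda\{,\}_2$ is again a Hamiltonian structure. *)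

theory Defs
  imports "HOL-Analysis.Analysis"
begin

text \<open>Coordinates x = (x^1,...,x^n) are points of real ^ 'n (the index type 'n is an
arbitrary finite type, n = CARD('n)).  Partial derivative in the k-th coordinate:\<close>

definition pd :: "'n::finite \<Rightarrow> (real^'n \<Rightarrow> real) \<Rightarrow> real^'n \<Rightarrow> real" where
  "pd k f x = deriv (\<lambda>t. f (x + t *\<^sub>R axis k 1)) 0"

definition C2 :: "(real^'n::finite \<Rightarrow> real) \<Rightarrow> bool" where
  "C2 f \<longleftrightarrow> (\<forall>x. f differentiable (at x)) \<and>
            (\<forall>k x. pd k f differentiable (at x)) \<and>
            (\<forall>k l. continuous_on UNIV (pd l (pd k f)))"

text \<open>Conditions (i)-(v) on a pair (g, Gamma), where g i j = g^{ij} and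
Gamma i j k = Gamma^{ij}_k.\<close>

definition hydro_conditions ::
  "('n::finite \<Rightarrow> 'n \<Rightarrow> real^'n \<Rightarrow> real) \<Rightarrow> ('n \<Rightarrow> 'n \<Rightarrow> 'n \<Rightarrow> real^'n \<Rightarrow> real) \<Rightarrow> bool" where
  "hydro_conditions g \<Gamma> \<longleftrightarrow>
     (\<forall>x i j. g i j x = g j i x) \<and>
     (\<forall>x i j k. pd k (g i j) x = \<Gamma> i j k x + \<Gamma> j i k x) \<and>
     (\<forall>x j r s. (\<Sum>i\<in>UNIV. g i j x * \<Gamma> r s i x) = (\<Sum>i\<in>UNIV. g r i x * \<Gamma> j s i x)) \<and>
     (\<forall>x i j k r.
        (\<Sum>t\<in>UNIV. \<Gamma> i j t x * \<Gamma> t k r x - \<Gamma> i k t x * \<Gamma> t j r x)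
        = (\<Sum>t\<in>UNIV. g t i x * (pd t (\<Gamma> j k r) x - pd r (\<Gamma> j k t) x))) \<and>
     (\<forall>x i j k q r.
        (let T = (\<lambda>i j k. \<Sum>t\<in>UNIV.
                    (pd q (\<Gamma> i j t) x - pd t (\<Gamma> i j q) x) * \<Gamma> t k r x
                  + (pd r (\<Gamma> i j t) x - pd t (\<Gamma> i j r) x) * \<Gamma> t k q x)
         in T i j k + T j k i + T k i j = 0))"

definition compatible ::
  "('n::finite \<Rightarrow> 'n \<Rightarrow> real^'n \<Rightarrow> real) \<Rightarrow> ('n \<Rightarrow> 'n \<Rightarrow> 'n \<Rightarrow> real^'n \<Rightarrow> real) \<Rightarrow>
   ('n \<Rightarrow> 'n \<Rightarrow> real^'n \<Rightarrow> real) \<Rightarrow> ('n \<Rightarrow> 'n \<Rightarrow> 'n \<Rightarrow> real^'n \<Rightarrow> real) \<Rightarrow> bool" where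
  "compatible g1 \<Gamma>1 g2 \<Gamma>2 \<longleftrightarrow>
     hydro_conditions g1 \<Gamma>1 \<and> hydro_conditions g2 \<Gamma>2 \<and>
     (\<forall>c::real. hydro_conditions (\<lambda>i j x. g1 i j x + c * g2 i j x)
                                   (\<lambda>i j k x. \<Gamma>1 i j k x + c * \<Gamma>2 i j k x))"

end

theory Submission
  imports Defs
begin

lemma line_differentiable:
  fixes f :: "real^'n::finite \<Rightarrow> real"
  assumes "\<forall>y. f differentiable at y"
  shows "(\<lambda>t. f (x + t *\<^sub>R a)) differentiable at t"
proof -
  have "(\<lambda>t::real. x + t *\<^sub>R a) differentiable at t"
    by (intro derivative_intros differentiable_add differentiable_const differentiable_scaleR differentiable_ident)
  then show ?thesis using assms differentiable_chain_at[of "\<lambda>t::real. x + t *\<^sub>R a" t f]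
    by (simp add: o_def)
qed

lemma line_deriv:
  fixes f :: "real^'n::finite \<Rightarrow> real"
  assumes "\<forall>y. f differentiable at y"
  shows "((\<lambda>t. f (x + t *\<^sub>R axis k 1)) has_real_derivative pd k f (x + t *\<^sub>R axis k 1)) (at t)"
proof -
  define \<phi> where "\<phi> = (\<lambda>t. f (x + t *\<^sub>R axis k 1))"
  have d: "(\<phi> has_real_derivative deriv \<phi> t) (at t)"
    unfolding \<phi>_def using line_differentiable[OF assms] DERIV_deriv_iff_real_differentiable by blast
  have "(\<phi> has_real_derivative deriv \<phi> t) (at (0 + t))" using d by simp
  then have "((\<lambda>s. \<phi> (s + t)) has_real_derivative deriv \<phi> t) (at 0)"
    using DERIV_shift by blast
  moreover have "(\<lambda>s. \<phi> (s + t)) = (\<lambda>s. f ((x + t *\<^sub>R axis k 1) + s *\<^sub>R axis k 1))"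
    unfolding \<phi>_def by (simp add: algebra_simps)
  ultimately have "pd k f (x + t *\<^sub>R axis k 1) = deriv \<phi> t"
    unfolding pd_def by (metis DERIV_imp_deriv)
  then show ?thesis using d unfolding \<phi>_def by simp
qed

lemma pd_lin:
  fixes f h :: "real^'n::finite \<Rightarrow> real"
  assumes "\<forall>y. f differentiable at y" "\<forall>y. h differentiable at y"
  shows "pd k (\<lambda>x. f x + c * h x) x = pd k f x + c * pd k h x"
proof -
  have "((\<lambda>t. f (x + t *\<^sub>R axis k 1) + c * h (x + t *\<^sub>R axis k 1)) has_real_derivative
        pd k f x + c * pd k h x) (at 0)"
    using line_deriv[OF assms(1), of x k 0] line_deriv[OF assms(2), of x k 0]
    by (auto intro!: derivative_eq_intros)
  then show ?thesis unfolding pd_def by (rule DERIV_imp_deriv)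
qed

lemma pd_shift: "pd k (\<lambda>x. f (x + v)) x = pd k f (x + v)"
  unfolding pd_def by (simp add: add_ac)

lemma affine:
  fixes f :: "real^'n::finite \<Rightarrow> real"
  assumes "C2 f" "\<And>x. pd b (pd b f) x = 0"
  shows "f (x + c *\<^sub>R axis b 1) = f x + c * pd b f x"
proof -
  have df: "\<forall>y. f differentiable at y" and dp: "\<forall>y. pd b f differentiable at y"
    using assms(1) unfolding C2_def by auto
  define \<psi> where "\<psi> = (\<lambda>t. pd b f (x + t *\<^sub>R axis b 1))"
  have "\<forall>t. (\<psi> has_real_derivative 0) (at t)"
    using line_deriv[OF dp, of x b] assms(2) unfolding \<psi>_def by simp
  then have pc: "\<And>t. \<psi> t = \<psi> 0" using DERIV_isconst_all by blast
  have "\<forall>t. ((\<lambda>t. f (x + t *\<^sub>R axis b 1) - t * \<psi> 0) has_real_derivative 0) (at t)"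
  proof
    fix t
    have "((\<lambda>t. f (x + t *\<^sub>R axis b 1) - t * \<psi> 0) has_real_derivative \<psi> t - 1 * \<psi> 0) (at t)"
      using line_deriv[OF df, of x b t] unfolding \<psi>_def
      by (auto intro!: derivative_eq_intros)
    then show "((\<lambda>t. f (x + t *\<^sub>R axis b 1) - t * \<psi> 0) has_real_derivative 0) (at t)"
      using pc[of t] by simp
  qed
  then have "f (x + c *\<^sub>R axis b 1) - c * \<psi> 0 = f (x + 0 *\<^sub>R axis b 1) - 0 * \<psi> 0"
    by (rule DERIV_isconst_all)
  then show ?thesis unfolding \<psi>_def by simp
qed

lemma shifted_hydro:
  fixes g :: "'n::finite \<Rightarrow> 'n \<Rightarrow> real^'n \<Rightarrow> real"
  assumes "hydro_conditions g \<Gamma>"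
  shows "hydro_conditions (\<lambda>i j x. g i j (x + v)) (\<lambda>i j k x. \<Gamma> i j k (x + v))"
proof -
  note A0 = assms[unfolded hydro_conditions_def]
  note A = A0[THEN conjunct1] A0[THEN conjunct2, THEN conjunct1] A0[THEN conjunct2, THEN conjunct2, THEN conjunct1]
     A0[THEN conjunct2, THEN conjunct2, THEN conjunct2, THEN conjunct1] A0[THEN conjunct2, THEN conjunct2, THEN conjunct2, THEN conjunct2]
  show ?thesis unfolding hydro_conditions_def pd_shift
    apply (intro conjI allI)
    subgoal for x i j using A(1) by blast
    subgoal for x i j k using A(2) by blast
    subgoal for x i j k using A(3) by blast
    subgoal for x i j k r using A(4) by blast
    subgoal for x i j k q r using A(5) unfolding Let_def by blast
    done
qed

theorem lemma8:
  fixes g :: "'n::finite \<Rightarrow> 'n \<Rightarrow> real^'n \<Rightarrow> real"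
    and \<Gamma> :: "'n \<Rightarrow> 'n \<Rightarrow> 'n \<Rightarrow> real^'n \<Rightarrow> real"
    and b :: 'n
  assumes reg_g: "\<And>i j. C2 (g i j)"
    and reg_\<Gamma>: "\<And>i j k. C2 (\<Gamma> i j k)"
    and hs: "hydro_conditions g \<Gamma>"
    and lin_g: "\<And>i j x. pd b (pd b (g i j)) x = 0"
    and lin_\<Gamma>: "\<And>i j k x. pd b (pd b (\<Gamma> i j k)) x = 0"
  shows "(\<forall>c::real. hydro_conditions (\<lambda>i j x. g i j x + c * pd b (g i j) x)
                                    (\<lambda>i j k x. \<Gamma> i j k x + c * pd b (\<Gamma> i j k) x))
         \<and> compatible g \<Gamma> (\<lambda>i j. pd b (g i j)) (\<lambda>i j k. pd b (\<Gamma> i j k))"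
proof -
  have P1: "hydro_conditions (\<lambda>i j x. g i j x + c * pd b (g i j) x)
                  (\<lambda>i j k x. \<Gamma> i j k x + c * pd b (\<Gamma> i j k) x)" for c :: real
  proof -
    have eg: "(\<lambda>i j x. g i j x + c * pd b (g i j) x) = (\<lambda>i j x. g i j (x + c *\<^sub>R axis b 1))"
      using affine[OF reg_g lin_g] by simp
    have eG: "(\<lambda>i j k x. \<Gamma> i j k x + c * pd b (\<Gamma> i j k) x) = (\<lambda>i j k x. \<Gamma> i j k (x + c *\<^sub>R axis b 1))"
      using affine[OF reg_\<Gamma> lin_\<Gamma>] by simp
    show ?thesis unfolding eg eG by (rule shifted_hydro[OF hs])
  qed
  have dg: "\<forall>y. g i j differentiable at y" "\<forall>y. pd b (g i j) differentiable at y" for i j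
    using reg_g[of i j] unfolding C2_def by auto
  have dG: "\<forall>y. \<Gamma> i j k differentiable at y" "\<forall>y. pd b (\<Gamma> i j k) differentiable at y" for i j k
    using reg_\<Gamma>[of i j k] unfolding C2_def by auto
  note pl = pd_lin[OF dg] pd_lin[OF dG]
  have H: "hydro_conditions (\<lambda>i j x. g i j x + c * pd b (g i j) x)
                  (\<lambda>i j k x. \<Gamma> i j k x + c * pd b (\<Gamma> i j k) x) \<longleftrightarrow> 
     (\<forall>x i j. g i j x + c * pd b (g i j) x = g j i x + c * pd b (g j i) x) \<and>
     (\<forall>x i j k. pd k (g i j) x + c * pd k (pd b (g i j)) x = \<Gamma> i j k x + c * pd b (\<Gamma> i j k) x + (\<Gamma> j i k x + c * pd b (\<Gamma> j i k) x)) \<and>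
     (\<forall>x j r s. (\<Sum>i\<in>UNIV. (g i j x + c * pd b (g i j) x) * (\<Gamma> r s i x + c * pd b (\<Gamma> r s i) x)) = (\<Sum>i\<in>UNIV. (g r i x + c * pd b (g r i) x) * (\<Gamma> j s i x + c * pd b (\<Gamma> j s i) x))) \<and>
     (\<forall>x i j k r.
        (\<Sum>t\<in>UNIV. (\<Gamma> i j t x + c * pd b (\<Gamma> i j t) x) * (\<Gamma> t k r x + c * pd b (\<Gamma> t k r) x) - (\<Gamma> i k t x + c * pd b (\<Gamma> i k t) x) * (\<Gamma> t j r x + c * pd b (\<Gamma> t j r) x))
        = (\<Sum>t\<in>UNIV. (g t i x + c * pd b (g t i) x) * ((pd t (\<Gamma> j k r) x + c * pd t (pd b (\<Gamma> j k r)) x) - (pd r (\<Gamma> j k t) x + c * pd r (pd b (\<Gamma> j k t)) x)))) \<and>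
     (\<forall>x i j k q r.
        (let T = (\<lambda>i j k. \<Sum>t\<in>UNIV.
                    ((pd q (\<Gamma> i j t) x + c * pd q (pd b (\<Gamma> i j t)) x) - (pd t (\<Gamma> i j q) x + c * pd t (pd b (\<Gamma> i j q)) x)) * (\<Gamma> t k r x + c * pd b (\<Gamma> t k r) x)
                  + ((pd r (\<Gamma> i j t) x + c * pd r (pd b (\<Gamma> i j t)) x) - (pd t (\<Gamma> i j r) x + c * pd t (pd b (\<Gamma> i j r)) x)) * (\<Gamma> t k q x + c * pd b (\<Gamma> t k q) x))
         in T i j k + T j k i + T k i j = 0))" for c :: real
    unfolding hydro_conditions_def pl ..
  note H1 = H[of 1, THEN iffD1, OF P1] and Hm = H[of "-1", THEN iffD1, OF P1]
    and H0 = H[of 0, THEN iffD1, OF P1]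
  have D: "hydro_conditions (\<lambda>i j. pd b (g i j)) (\<lambda>i j k. pd b (\<Gamma> i j k))"
    unfolding hydro_conditions_def
  proof (intro conjI allI)
    fix x i j
    show "pd b (g i j) x = pd b (g j i) x"
      using H1[THEN conjunct1, rule_format, where x=x and i=i and j=j]
        H0[THEN conjunct1, rule_format, where x=x and i=i and j=j] by simp
  next
    fix x i j k
    show "pd k (pd b (g i j)) x = pd b (\<Gamma> i j k) x + pd b (\<Gamma> j i k) x"
      using H1[THEN conjunct2, THEN conjunct1, rule_format, where x=x and i=i and j=j and k=k]
        H0[THEN conjunct2, THEN conjunct1, rule_format, where x=x and i=i and j=j and k=k] by simp
  next
    fix x j r s
    note e1 = H1[THEN conjunct2, THEN conjunct2, THEN conjunct1, rule_format, where x=x and j=j and r=r and s=s]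
    note em = Hm[THEN conjunct2, THEN conjunct2, THEN conjunct1, rule_format, where x=x and j=j and r=r and s=s]
    note e0 = H0[THEN conjunct2, THEN conjunct2, THEN conjunct1, rule_format, where x=x and j=j and r=r and s=s]
    show "(\<Sum>i\<in>UNIV. pd b (g i j) x * pd b (\<Gamma> r s i) x) = (\<Sum>i\<in>UNIV. pd b (g r i) x * pd b (\<Gamma> j s i) x)"
      using e1 em e0 by (simp add: algebra_simps sum.distrib sum_subtractf)
  next
    fix x i j k r
    note e1 = H1[THEN conjunct2, THEN conjunct2, THEN conjunct2, THEN conjunct1, rule_format, where x=x and i=i and j=j and k=k and r=r]
    note em = Hm[THEN conjunct2, THEN conjunct2, THEN conjunct2, THEN conjunct1, rule_format, where x=x and i=i and j=j and k=k and r=r]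
    note e0 = H0[THEN conjunct2, THEN conjunct2, THEN conjunct2, THEN conjunct1, rule_format, where x=x and i=i and j=j and k=k and r=r]
    show "(\<Sum>t\<in>UNIV. pd b (\<Gamma> i j t) x * pd b (\<Gamma> t k r) x - pd b (\<Gamma> i k t) x * pd b (\<Gamma> t j r) x)
        = (\<Sum>t\<in>UNIV. pd b (g t i) x * (pd t (pd b (\<Gamma> j k r)) x - pd r (pd b (\<Gamma> j k t)) x))"
      using e1 em e0 by (simp add: algebra_simps sum.distrib sum_subtractf)
  next
    fix x i j k q r
    note e1 = H1[THEN conjunct2, THEN conjunct2, THEN conjunct2, THEN conjunct2, rule_format, where x=x and i=i and j=j and k=k and q=q and r=r]
    note em = Hm[THEN conjunct2, THEN conjunct2, THEN conjunct2, THEN conjunct2, rule_format, where x=x and i=i and j=j and k=k and q=q and r=r]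
    note e0 = H0[THEN conjunct2, THEN conjunct2, THEN conjunct2, THEN conjunct2, rule_format, where x=x and i=i and j=j and k=k and q=q and r=r]
    show "let T = (\<lambda>i j k. \<Sum>t\<in>UNIV.
                    (pd q (pd b (\<Gamma> i j t)) x - pd t (pd b (\<Gamma> i j q)) x) * pd b (\<Gamma> t k r) x
                  + (pd r (pd b (\<Gamma> i j t)) x - pd t (pd b (\<Gamma> i j r)) x) * pd b (\<Gamma> t k q) x)
         in T i j k + T j k i + T k i j = 0"
      using e1 em e0 by (simp add: Let_def algebra_simps sum.distrib sum_subtractf)
  qed
  show ?thesis unfolding compatible_def using P1 hs D by blast
qed

end
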